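(* Let $\varepsilon,\beta>0$, let $u_{\varepsilon,\beta,0}\in C^\infty(\mathbb{R})$ satisfy, with $C_0$ independent of $\varepsilon,\beta$, $$\|u_{\varepsilon,\beta,0}\|^2_{L^2}+\|u_{\varepsilon,\beta,0}\|^4_{L^4}+(\beta+\varepsilon^2)\|\partial_x u_{\varepsilon,\beta,0}\|^2_{L^2}\le C_0,\quad (\beta\varepsilon+\beta\varepsilon^2+\beta^2)\|\partial_{xx}^2 u_{\varepsilon,\beta,0}\|^2_{L^2}+(\beta^2\varepsilon^2+\beta^3)\|\partial_{xxx}^3 u_{\varepsilon,\beta,0}\|^2_{L^2}\le C_0,\quad \beta^4\|\partial_{xxxx}^4 u_{\varepsilon,\beta,0}\|^2_{L^2}\le C_0,$$ and let $u_{\varepsilon,\beta}$ be the smooth solution of $$\partial_t u_{\varepsilon,\beta}+\partial_x u_{\varepsilon,\beta}^2+\beta\partial_{xxx}^3u_{\varepsilon,\beta}-\beta\partial_{txx}^3u_{\varepsilon,\beta}+\beta^2\partial_{txxxx}^5u_{\varepsilon,\beta}=\varepsilon\partial_{xx}^2u_{\varepsilon,\beta},\qquad u_{\varepsilon,\beta}(0,\cdot)=u_{\varepsilon,\beta,0}.$$ Then for each $t>0$, $$\|u_{\varepsilon,\beta}(t,\cdot)\|^2_{L^2(\mathbb{R})}+\beta\|\partial_x u_{\varepsilon,\beta}(t,\cdot)\|^2_{L^2(\mathbb{R})}+\beta^2\|\partial_{xx}^2 u_{\varepsilon,\beta}(t,\cdot)\|^2_{L^2(\mathbb{R})}+2\varepsilon\int_0^t\|\partial_x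 u_{\varepsilon,\beta}(s,\cdot)\|^2_{L^2(\mathbb{R})}ds\le C_0,$$ and in particular $$\|u_{\varepsilon,\beta}(t,\cdot)\|_{L^\infty(\mathbb{R})}\le C_0\beta^{-1/4},\qquad \|\partial_x u_{\varepsilon,\beta}(t,\cdot)\|_{L^\infty(\mathbb{R})}\le C_0\beta^{-3/4},$$ where $C_0$ denotes constants depending only on the initial data (not on $\varepsilon,\beta,t$).
   Context: Solutions are smooth and decay, together with their derivatives, as $|x|\to\infty$. *)

theory Defs
  imports "HOL-Analysis.Analysis"
begin

text \<open>Functions u t x of time t and space x. Partial derivatives: in time, one-sided
  at the boundary t = 0 (derivative within the closed half line), in space the usual one.\<close>

datatype pdir = Dt | Dx

definition pdt :: "(real \<Rightarrow> real \<Rightarrow> real) \<Rightarrow> real \<Rightarrow> real \<Rightarrow> real" where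
  "pdt g t x = vector_derivative (\<lambda>s. g s x) (at t within {0..})"

definition pdx :: "(real \<Rightarrow> real \<Rightarrow> real) \<Rightarrow> real \<Rightarrow> real \<Rightarrow> real" where
  "pdx g t x = deriv (\<lambda>y. g t y) x"

fun pD :: "pdir list \<Rightarrow> (real \<Rightarrow> real \<Rightarrow> real) \<Rightarrow> real \<Rightarrow> real \<Rightarrow> real" where
  "pD [] g = g"
| "pD (Dt # ds) g = pdt (pD ds g)"
| "pD (Dx # ds) g = pdx (pD ds g)"

definition smooth_hp :: "(real \<Rightarrow> real \<Rightarrow> real) \<Rightarrow> bool" where
  "smooth_hp u \<longleftrightarrow> (\<forall>ds.
     continuous_on ({0..} \<times> UNIV) (\<lambda>(t, x). pD ds u t x) \<and>
     (\<forall>t\<ge>0. \<forall>x.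
        ((\<lambda>s. pD ds u s x) has_real_derivative pD (Dt # ds) u t x) (at t within {0..}) \<and>
        ((\<lambda>y. pD ds u t y) has_real_derivative pD (Dx # ds) u t x) (at x)))"

definition decays_hp :: "(real \<Rightarrow> real \<Rightarrow> real) \<Rightarrow> bool" where
  "decays_hp u \<longleftrightarrow> (\<forall>ds T. \<exists>g :: real \<Rightarrow> real.
     integrable lborel (\<lambda>x. (g x)^2) \<and> (g \<longlongrightarrow> 0) at_infinity \<and>
     (\<forall>t\<in>{0..T}. \<forall>x. \<bar>pD ds u t x\<bar> \<le> g x))"

definition L2sq :: "(real \<Rightarrow> real) \<Rightarrow> real" where
  "L2sq f = (LINT x|lborel. (f x)^2)"

definition L4pow4 :: "(real \<Rightarrow> real) \<Rightarrow> real" where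
  "L4pow4 f = (LINT x|lborel. (f x)^4)"

end

theory Submission
  imports Defs
begin


lemma int_prod:
  fixes f h g1 g2 :: "real \<Rightarrow> real"
  assumes "continuous_on UNIV f" "continuous_on UNIV h" "\<And>x. \<bar>f x\<bar> \<le> g1 x" "\<And>x. \<bar>h x\<bar> \<le> g2 x"
    "integrable lborel (\<lambda>x. (g1 x)^2)" "integrable lborel (\<lambda>x. (g2 x)^2)"
  shows "integrable lborel (\<lambda>x. f x * h x)"
proof (rule Bochner_Integration.integrable_bound[where f="\<lambda>x. (g1 x)^2 + (g2 x)^2"])
  show "integrable lborel (\<lambda>x. (g1 x)\<^sup>2 + (g2 x)\<^sup>2)" using assms by auto
  show "(\<lambda>x. f x * h x) \<in> borel_measurable lborel"
    using assms(1,2) by (auto intro!: borel_measurable_continuous_onI continuous_intros)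
  show "AE x in lborel. norm (f x * h x) \<le> norm ((g1 x)\<^sup>2 + (g2 x)\<^sup>2)"
  proof (intro AE_I2)
    fix x
    have a: "\<bar>f x\<bar> \<le> g1 x" "\<bar>h x\<bar> \<le> g2 x" using assms by auto
    have "\<bar>f x * h x\<bar> \<le> g1 x * g2 x" using a by (simp add: abs_mult mult_mono')
    also have "\<dots> \<le> (g1 x)^2 + (g2 x)^2" using a
    proof -
      have "0 \<le> (g1 x - g2 x)^2" by simp
      moreover have "0 \<le> g1 x * g2 x" using a by (meson abs_ge_zero order_trans zero_le_mult_iff)
      ultimately show ?thesis by (simp add: power2_diff)
    qed
    finally show "norm (f x * h x) \<le> norm ((g1 x)\<^sup>2 + (g2 x)\<^sup>2)" by simp
  qed
qed

lemma FTC_R: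
  fixes F f :: "real \<Rightarrow> real"
  assumes D: "\<And>x. (F has_real_derivative f x) (at x)" and c: "continuous_on UNIV f"
    and i: "integrable lborel f"
    and t: "(F \<longlongrightarrow> 0) at_top" and b: "(F \<longlongrightarrow> 0) at_bot"
  shows "integral\<^sup>L lborel f = 0"
proof -
  let ?s = "\<lambda>n::nat. \<lambda>x. indicator {-real n..real n} x *\<^sub>R f x"
  have e: "integral\<^sup>L lborel (?s n) = F (real n) - F (-real n)" for n
    by (rule integral_FTC_atLeastAtMost)
       (auto intro: continuous_on_subset[OF c] has_field_derivative_at_within[OF D]
          simp: has_real_derivative_iff_has_vector_derivative[symmetric] D)
  have fm: "f \<in> borel_measurable lborel" using i by (rule borel_measurable_integrable)
  have l1: "(\<lambda>n. integral\<^sup>L lborel (?s n)) \<longlonglongrightarrow> integral\<^sup>L lborel f"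
  proof (rule integral_dominated_convergence[where w="\<lambda>x. norm (f x)"])
    show "f \<in> borel_measurable lborel" by fact
    show "?s n \<in> borel_measurable lborel" for n using fm by measurable
    show "integrable lborel (\<lambda>x. norm (f x))" using i by auto
    show "AE x in lborel. (\<lambda>n. ?s n x) \<longlonglongrightarrow> f x"
    proof (intro AE_I2 tendsto_eventually)
      fix x :: real
      show "\<forall>\<^sub>F n in sequentially. ?s n x = f x"
        unfolding eventually_sequentially
      proof (rule exI[of _ "nat \<lceil>\<bar>x\<bar>\<rceil>"], intro allI impI)
        fix n assume "nat \<lceil>\<bar>x\<bar>\<rceil> \<le> n"
        then have "\<bar>x\<bar> \<le> real n" by linarith
        then show "?s n x = f x" by (auto simp: indicator_def)
      qed
    qed
    show "AE x in lborel. norm (?s n x) \<le> norm (f x)" for n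
      by (auto simp: indicator_def)
  qed
  have l2: "(\<lambda>n. F (real n) - F (-real n)) \<longlonglongrightarrow> 0"
  proof -
    have "(\<lambda>n. F (real n)) \<longlonglongrightarrow> 0"
      by (rule filterlim_compose[OF t filterlim_real_sequentially])
    moreover have "(\<lambda>n. F (-real n)) \<longlonglongrightarrow> 0"
      by (rule filterlim_compose[OF b]) (simp add: filterlim_uminus_at_bot filterlim_real_sequentially)
    ultimately show ?thesis using tendsto_diff by fastforce
  qed
  show ?thesis using l1 l2 e LIMSEQ_unique by simp
qed

lemma sup_bound:
  fixes F f :: "real \<Rightarrow> real"
  assumes D: "\<And>x. (F has_real_derivative f x) (at x)" and c: "continuous_on UNIV f"
    and i: "integrable lborel f" and b: "(F \<longlongrightarrow> 0) at_bot"
  shows "F x \<le> integral\<^sup>L lborel (\<lambda>y. \<bar>f y\<bar>)"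
proof -
  have fm: "f \<in> borel_measurable lborel" using i by (rule borel_measurable_integrable)
  have k: "F x - F (-real n) \<le> integral\<^sup>L lborel (\<lambda>y. \<bar>f y\<bar>)" if "real n \<ge> -x" for n
  proof -
    have "F x - F (-real n) = integral\<^sup>L lborel (\<lambda>y. indicator {-real n..x} y *\<^sub>R f y)"
      by (rule integral_FTC_atLeastAtMost[symmetric])
         (use that in \<open>auto intro: continuous_on_subset[OF c] has_field_derivative_at_within[OF D]
          simp: has_real_derivative_iff_has_vector_derivative[symmetric] D\<close>)
    also have "\<dots> \<le> integral\<^sup>L lborel (\<lambda>y. \<bar>f y\<bar>)"
    proof (rule integral_mono)
      show "integrable lborel (\<lambda>y. \<bar>f y\<bar>)" using i by auto
      show "integrable lborel (\<lambda>y. indicator {-real n..x} y *\<^sub>R f y)"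
        using i by (intro integrable_mult_indicator) auto
    qed (simp add: indicator_def abs_ge_self)
    finally show ?thesis .
  qed
  have l: "(\<lambda>n. F x - F (-real n)) \<longlonglongrightarrow> F x - 0"
  proof (rule tendsto_diff[OF tendsto_const])
    show "(\<lambda>n. F (-real n)) \<longlonglongrightarrow> 0"
      by (rule filterlim_compose[OF b]) (simp add: filterlim_uminus_at_bot filterlim_real_sequentially)
  qed
  show ?thesis
  proof (rule LIMSEQ_le_const2[OF l[simplified]])
    show "\<exists>N. \<forall>n\<ge>N. F x - F (- real n) \<le> integral\<^sup>L lborel (\<lambda>y. \<bar>f y\<bar>)"
    proof (rule exI[of _ "nat \<lceil>\<bar>x\<bar>\<rceil>"], intro allI impI k)
      fix n assume "nat \<lceil>\<bar>x\<bar>\<rceil> \<le> n"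
      then show "- x \<le> real n" by linarith
    qed
  qed
qed



lemma cont_of_deriv:
  fixes f f' :: "real \<Rightarrow> real"
  assumes "\<And>x. (f has_real_derivative f' x) (at x)"
  shows "continuous_on UNIV f"
  using assms by (intro continuous_at_imp_continuous_on ballI) (auto intro: DERIV_isCont)

lemma IBP:
  fixes f f' h h' :: "real \<Rightarrow> real"
  assumes df: "\<And>x. (f has_real_derivative f' x) (at x)" and dh: "\<And>x. (h has_real_derivative h' x) (at x)"
    and cf: "continuous_on UNIV f'" and ch: "continuous_on UNIV h'"
    and i1: "integrable lborel (\<lambda>x. f x * h' x)" and i2: "integrable lborel (\<lambda>x. f' x * h x)"
    and t: "((\<lambda>x. f x * h x) \<longlongrightarrow> 0) at_top" and b: "((\<lambda>x. f x * h x) \<longlongrightarrow> 0) at_bot"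
  shows "integral\<^sup>L lborel (\<lambda>x. f x * h' x) = - integral\<^sup>L lborel (\<lambda>x. f' x * h x)"
proof -
  have c1: "continuous_on UNIV f" by (rule cont_of_deriv[OF df])
  have c2: "continuous_on UNIV h" by (rule cont_of_deriv[OF dh])
  have "integral\<^sup>L lborel (\<lambda>x. f' x * h x + f x * h' x) = 0"
  proof (rule FTC_R[OF _ _ _ t b])
    show "((\<lambda>x. f x * h x) has_real_derivative f' x * h x + f x * h' x) (at x)" for x
      using DERIV_mult[OF df dh] by (simp add: mult.commute)
    show "continuous_on UNIV (\<lambda>x. f' x * h x + f x * h' x)"
      using c1 c2 cf ch by (intro continuous_intros) auto
    show "integrable lborel (\<lambda>x. f' x * h x + f x * h' x)" using i1 i2 by auto
  qed
  then show ?thesis using i1 i2 by simp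
qed

lemma mvt_aux:
  fixes \<phi> \<phi>' :: "real \<Rightarrow> real"
  assumes d: "\<And>s. s \<ge> 0 \<Longrightarrow> (\<phi> has_real_derivative \<phi>' s) (at s within {0..})"
    and ab: "0 \<le> a" "a < b"
  shows "\<exists>z. a \<le> z \<and> z \<le> b \<and> (\<phi> b - \<phi> a) / (b - a) = \<phi>' z"
proof -
  have "continuous_on {a..b} \<phi>"
    by (rule DERIV_continuous_on[where D=\<phi>']) (use ab in \<open>auto intro: DERIV_subset[OF d]\<close>)
  moreover have "\<phi> differentiable (at z)" if "a < z" "z < b" for z
  proof -
    have "z \<in> interior {0::real..}" using that ab by simp
    then have "at z within {0..} = at z" by (rule at_within_interior)
    then show ?thesis using d[of z] that ab real_differentiable_def by fastforce
  qed
  ultimately obtain l z where z: "a < z" "z < b" "DERIV \<phi> z :> l" "\<phi> b - \<phi> a = (b - a) * l"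
    using MVT[OF ab(2)] by blast
  have "z \<in> interior {0::real..}" using z ab by simp
  then have "at z within {0..} = at z" by (rule at_within_interior)
  then have "l = \<phi>' z" using d[of z] z ab DERIV_unique by fastforce
  then show ?thesis using z ab by (intro exI[of _ z]) auto
qed

lemma mvt_quot:
  fixes \<phi> \<phi>' :: "real \<Rightarrow> real"
  assumes d: "\<And>s. s \<ge> 0 \<Longrightarrow> (\<phi> has_real_derivative \<phi>' s) (at s within {0..})"
    and ab: "0 \<le> a" "0 \<le> b" "a \<noteq> b"
  shows "\<exists>z. min a b \<le> z \<and> z \<le> max a b \<and> (\<phi> b - \<phi> a) / (b - a) = \<phi>' z"
proof (cases "a < b")
  case True
  then show ?thesis using mvt_aux[OF d ab(1) True] by auto
next
  case False
  then have "b < a" using ab by auto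
  from mvt_aux[OF d ab(2) this] obtain z where "b \<le> z" "z \<le> a" "(\<phi> a - \<phi> b) / (a - b) = \<phi>' z"
    by blast
  moreover have "(\<phi> a - \<phi> b) / (a - b) = (\<phi> b - \<phi> a) / (b - a)"
    by (metis minus_diff_eq minus_divide_divide)
  ultimately show ?thesis using \<open>b < a\<close> by (intro exI[of _ z]) auto
qed



lemma two_mul_le:
  fixes a b c d :: real
  assumes "\<bar>a\<bar> \<le> c" "\<bar>b\<bar> \<le> d"
  shows "\<bar>2 * a * b\<bar> \<le> c^2 + d^2"
proof -
  have "\<bar>a * b\<bar> \<le> c * d" using assms by (simp add: abs_mult mult_mono')
  moreover have "0 \<le> (c - d)^2" by simp
  ultimately show ?thesis by (simp add: power2_diff abs_mult)
qed

lemma deriv_L2: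
  fixes f ft :: "real \<Rightarrow> real \<Rightarrow> real"
  assumes d: "\<And>s x. s \<ge> 0 \<Longrightarrow> ((\<lambda>s. f s x) has_real_derivative ft s x) (at s within {0..})"
    and cf: "\<And>s. s \<ge> 0 \<Longrightarrow> continuous_on UNIV (f s)"
    and cft: "\<And>s. s \<ge> 0 \<Longrightarrow> continuous_on UNIV (ft s)"
    and dom: "\<And>T. \<exists>g. integrable lborel (\<lambda>x. (g x)^2) \<and> (\<forall>s\<in>{0..T}. \<forall>x. \<bar>f s x\<bar> \<le> g x)"
    and domt: "\<And>T. \<exists>g. integrable lborel (\<lambda>x. (g x)^2) \<and> (\<forall>s\<in>{0..T}. \<forall>x. \<bar>ft s x\<bar> \<le> g x)"
    and t: "t \<ge> 0"
  shows "((\<lambda>s. LINT x|lborel. (f s x)^2) has_real_derivative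
           (LINT x|lborel. 2 * f t x * ft t x)) (at t within {0..})"
proof -
  let ?P = "\<lambda>s. LINT x|lborel. (f s x)^2"
  have dsq: "((\<lambda>s. (f s x)^2) has_real_derivative 2 * f s x * ft s x) (at s within {0..})"
    if "s \<ge> 0" for s x
    using DERIV_power[OF d[OF that, of x], of 2] by (simp add: mult.commute mult.left_commute)
  show ?thesis unfolding has_field_derivative_iff tendsto_at_iff_sequentially
  proof (intro allI impI)
    fix X :: "nat \<Rightarrow> real" assume X: "\<forall>i. X i \<in> {0..} - {t}" and Xl: "X \<longlonglongrightarrow> t"
    have "Bseq X" using Xl by (intro convergent_imp_Bseq convergentI)
    then obtain K where K: "\<forall>n. norm (X n) \<le> K" by (auto elim: BseqE)
    define T where "T = max K t"
    obtain g where g: "integrable lborel (\<lambda>x. (g x)^2)" "\<forall>s\<in>{0..T}. \<forall>x. \<bar>f s x\<bar> \<le> g x"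
      using dom by blast
    obtain g' where g': "integrable lborel (\<lambda>x. (g' x)^2)" "\<forall>s\<in>{0..T}. \<forall>x. \<bar>ft s x\<bar> \<le> g' x"
      using domt by blast
    have X0: "X i \<ge> 0" "X i \<noteq> t" for i using X by auto
    have XT: "X i \<in> {0..T}" for i using X0[of i] K[rule_format, of i] unfolding T_def by auto
    have tT: "t \<in> {0..T}" using t unfolding T_def by auto
    have sq_int: "integrable lborel (\<lambda>x. (f s x)^2)" if "s \<in> {0..T}" for s
      using int_prod[of "f s" "f s" g g] cf[of s] g that by (simp add: power2_eq_square)
    have pr_int: "integrable lborel (\<lambda>x. 2 * f s x * ft s x)" if "s \<in> {0..T}" for s
      using int_prod[of "f s" "ft s" g g'] cf[of s] cft[of s] g g' that
      by (simp add: mult.assoc)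
    define q where "q i x = ((f (X i) x)^2 - (f t x)^2) / (X i - t)" for i x
    have eq: "(?P (X i) - ?P t) / (X i - t) = integral\<^sup>L lborel (q i)" for i
      unfolding q_def using sq_int[OF XT[of i]] sq_int[OF tT] by simp
    show "((\<lambda>y. (?P y - ?P t) / (y - t)) \<circ> X) \<longlonglongrightarrow> (LINT x|lborel. 2 * f t x * ft t x)"
      unfolding comp_def eq
    proof (rule integral_dominated_convergence[where w = "\<lambda>x. (g x)^2 + (g' x)^2"])
      show "(\<lambda>x. 2 * f t x * ft t x) \<in> borel_measurable lborel"
        using pr_int[OF tT] by (rule borel_measurable_integrable)
      show "q i \<in> borel_measurable lborel" for i
      proof -
        have "integrable lborel (q i)" unfolding q_def using sq_int[OF XT[of i]] sq_int[OF tT] by simp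
        then show ?thesis by (rule borel_measurable_integrable)
      qed
      show "integrable lborel (\<lambda>x. (g x)^2 + (g' x)^2)" using g g' by simp
      show "AE x in lborel. (\<lambda>i. q i x) \<longlonglongrightarrow> 2 * f t x * ft t x"
      proof (rule AE_I2)
        fix x
        have "((\<lambda>y. ((f y x)^2 - (f t x)^2) / (y - t)) \<longlongrightarrow> 2 * f t x * ft t x) (at t within {0..})"
          using dsq[OF t, of x] unfolding has_field_derivative_iff .
        then have "((\<lambda>y. ((f y x)^2 - (f t x)^2) / (y - t)) \<circ> X) \<longlonglongrightarrow> 2 * f t x * ft t x"
          unfolding tendsto_at_iff_sequentially using X Xl by blast
        then show "(\<lambda>i. q i x) \<longlonglongrightarrow> 2 * f t x * ft t x" unfolding q_def comp_def .
      qed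
      show "AE x in lborel. norm (q i x) \<le> (g x)^2 + (g' x)^2" for i
      proof (rule AE_I2)
        fix x
        obtain z where z: "min t (X i) \<le> z" "z \<le> max t (X i)"
          "q i x = 2 * f z x * ft z x"
          using mvt_quot[where \<phi>="\<lambda>s. (f s x)^2" and \<phi>'="\<lambda>s. 2 * f s x * ft s x", OF dsq, of t "X i"]
            t X0[of i] unfolding q_def by auto
        have zT: "z \<in> {0..T}" using z XT[of i] tT by auto
        show "norm (q i x) \<le> (g x)^2 + (g' x)^2"
          unfolding z(3) real_norm_def
          by (rule two_mul_le) (use g g' zT in auto)
      qed
    qed
  qed
qed



lemma smooth_D:
  assumes "smooth_hp u"
  shows "continuous_on ({0..} \<times> UNIV) (\<lambda>(t, x). pD ds u t x)"
    and "t \<ge> 0 \<Longrightarrow> ((\<lambda>s. pD ds u s x) has_real_derivative pD (Dt # ds) u t x) (at t within {0..})"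
    and "t \<ge> 0 \<Longrightarrow> ((\<lambda>y. pD ds u t y) has_real_derivative pD (Dx # ds) u t x) (at x)"
  using assms unfolding smooth_hp_def by blast+

lemma smooth_cont_x:
  assumes "smooth_hp u" "t \<ge> 0"
  shows "continuous_on UNIV (pD ds u t)"
  using cont_of_deriv[OF smooth_D(3)[OF assms(1) assms(2)]] by simp

lemma schwarz:
  assumes s: "smooth_hp u" and t: "t > 0"
  shows "pD (Dt # Dx # ds) u t x = pD (Dx # Dt # ds) u t x"
proof -
  define w where "w = pD ds u"
  define wx where "wx = pD (Dx # ds) u"
  define wt where "wt = pD (Dt # ds) u"
  define wxt where "wxt = pD (Dt # Dx # ds) u"
  define wtx where "wtx = pD (Dx # Dt # ds) u"
  have Dx_w: "\<And>s y. s \<ge> 0 \<Longrightarrow> ((\<lambda>y. w s y) has_real_derivative wx s y) (at y)"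
    unfolding w_def wx_def by (rule smooth_D(3)[OF s])
  have Dt_w: "\<And>s y. s \<ge> 0 \<Longrightarrow> ((\<lambda>s. w s y) has_real_derivative wt s y) (at s within {0..})"
    unfolding w_def wt_def by (rule smooth_D(2)[OF s])
  have Dt_wx: "\<And>s y. s \<ge> 0 \<Longrightarrow> ((\<lambda>s. wx s y) has_real_derivative wxt s y) (at s within {0..})"
    unfolding wxt_def wx_def by (rule smooth_D(2)[OF s])
  have Dx_wt: "\<And>s y. s \<ge> 0 \<Longrightarrow> ((\<lambda>y. wt s y) has_real_derivative wtx s y) (at y)"
    unfolding wtx_def wt_def by (rule smooth_D(3)[OF s])
  have cwxt: "continuous_on ({0..} \<times> UNIV) (\<lambda>(s, y). wxt s y)"
    unfolding wxt_def by (rule smooth_D(1)[OF s])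
  have cwx: "\<And>s. s \<ge> 0 \<Longrightarrow> continuous_on UNIV (wx s)"
    unfolding wx_def by (rule smooth_cont_x[OF s])
  have cwxt1: "\<And>s. s \<ge> 0 \<Longrightarrow> continuous_on UNIV (wxt s)"
    unfolding wxt_def by (rule smooth_cont_x[OF s])
  define a where "a = x - 1"
  have int_eq: "integral {a..b} (wx s) = w s b - w s a" if "s \<ge> 0" "a \<le> b" for s b
  proof -
    have "(wx s has_integral (w s b - w s a)) {a..b}"
    proof (rule fundamental_theorem_of_calculus[OF that(2)])
      fix y assume "y \<in> {a..b}"
      show "(w s has_vector_derivative wx s y) (at y within {a..b})"
        using Dx_w[OF that(1), of y] unfolding has_real_derivative_iff_has_vector_derivative
        by (simp add: has_vector_derivative_at_within)
    qed
    then show ?thesis by (rule integral_unique)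
  qed
  have step2: "wt t b - wt t a = integral {a..b} (wxt t)" if "a \<le> b" for b
  proof -
    let ?U = "{0::real<..}"
    have o: "open ?U" "t \<in> ?U" using t by auto
    have L: "((\<lambda>s. integral (cbox a b) (wx s)) has_field_derivative integral (cbox a b) (wxt t)) (at t within ?U)"
    proof (rule leibniz_rule_field_derivative)
      show "((\<lambda>s. wx s y) has_field_derivative wxt s y) (at s within ?U)" if "s \<in> ?U" "y \<in> cbox a b" for s y
        using Dt_wx[of s y] that by (auto intro: DERIV_subset)
      show "wx s integrable_on cbox a b" if "s \<in> ?U" for s
        using that unfolding cbox_interval
        by (intro integrable_continuous_interval continuous_on_subset[OF cwx]) auto
      show "continuous_on (?U \<times> cbox a b) (\<lambda>(s, y). wxt s y)"
        by (rule continuous_on_subset[OF cwxt]) auto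
      show "t \<in> ?U" "convex ?U" using t by (auto simp: convex_real_interval)
    qed
    then have L': "((\<lambda>s. integral {a..b} (wx s)) has_field_derivative integral {a..b} (wxt t)) (at t)"
      using at_within_open[OF o(2) o(1)] by simp
    have "((\<lambda>s. w s b - w s a) has_field_derivative wt t b - wt t a) (at t within {0..})"
      using Dt_w[of t b] Dt_w[of t a] t by (auto intro: DERIV_diff)
    moreover have "t \<in> interior {0::real..}" using t by simp
    ultimately have R: "((\<lambda>s. w s b - w s a) has_field_derivative wt t b - wt t a) (at t)"
      using at_within_interior by metis
    have L2: "((\<lambda>s. w s b - w s a) has_field_derivative integral {a..b} (wxt t)) (at t)"
      by (rule has_field_derivative_transform_within_open[OF L' o(1) o(2)])
         (use int_eq that in auto)
    show ?thesis using DERIV_unique[OF R L2] .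
  qed
  define H where "H b = wt t b - wt t a - integral {a..b} (wxt t)" for b
  have Hd: "(H has_field_derivative wtx t x - wxt t x) (at x)"
  proof -
    have "((\<lambda>b. integral {a..b} (wxt t)) has_real_derivative wxt t x) (at x within {a..x+1})"
      by (rule integral_has_real_derivative) (use cwxt1[of t] t a_def in \<open>auto intro: continuous_on_subset\<close>)
    moreover have "x \<in> interior {a..x+1}" unfolding a_def by simp
    ultimately have I: "((\<lambda>b. integral {a..b} (wxt t)) has_real_derivative wxt t x) (at x)"
      using at_within_interior by metis
    show ?thesis unfolding H_def
      using Dx_wt[of t x] t I by (auto intro!: derivative_eq_intros)
  qed
  have "((\<lambda>_. 0) has_field_derivative wtx t x - wxt t x) (at x)"
    by (rule has_field_derivative_transform_within_open[OF Hd, of "{a<..}"])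
       (auto simp: H_def step2[OF less_imp_le], simp add: a_def)
  then have "wtx t x - wxt t x = 0" using DERIV_const DERIV_unique by blast
  then show ?thesis unfolding wtx_def wxt_def by simp
qed



lemma decay_D:
  assumes "decays_hp u"
  shows "\<exists>g. integrable lborel (\<lambda>x. (g x)^2) \<and> (g \<longlongrightarrow> 0) at_infinity \<and>
           (\<forall>s\<in>{0..T}. \<forall>x. \<bar>pD ds u s x\<bar> \<le> g x)"
  using assms unfolding decays_hp_def by blast

lemma dom_D:
  assumes "decays_hp u"
  shows "\<exists>g. integrable lborel (\<lambda>x. (g x)^2) \<and> (\<forall>s\<in>{0..T}. \<forall>x. \<bar>pD ds u s x\<bar> \<le> g x)"
  using decay_D[OF assms] by blast

lemma lim_D:
  assumes "decays_hp u" "t \<ge> 0"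
  shows "(pD ds u t \<longlongrightarrow> 0) at_top" "(pD ds u t \<longlongrightarrow> 0) at_bot"
proof -
  obtain g where g: "(g \<longlongrightarrow> 0) at_infinity" "\<forall>s\<in>{0..t}. \<forall>x. \<bar>pD ds u s x\<bar> \<le> g x"
    using decay_D[OF assms(1), of t ds] by blast
  have "(pD ds u t \<longlongrightarrow> 0) at_infinity"
    by (rule Lim_null_comparison[OF _ g(1)]) (use g(2) assms(2) in auto)
  then show "(pD ds u t \<longlongrightarrow> 0) at_top" "(pD ds u t \<longlongrightarrow> 0) at_bot"
    by (auto intro: filterlim_mono at_top_le_at_infinity at_bot_le_at_infinity)
qed

lemma intpp:
  assumes s: "smooth_hp u" and d: "decays_hp u" and t: "t \<ge> 0"
  shows "integrable lborel (\<lambda>x. pD a u t x * pD b u t x)"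
proof -
  obtain g1 where g1: "integrable lborel (\<lambda>x. (g1 x)^2)" "\<forall>s\<in>{0..t}. \<forall>x. \<bar>pD a u s x\<bar> \<le> g1 x"
    using dom_D[OF d] by blast
  obtain g2 where g2: "integrable lborel (\<lambda>x. (g2 x)^2)" "\<forall>s\<in>{0..t}. \<forall>x. \<bar>pD b u s x\<bar> \<le> g2 x"
    using dom_D[OF d] by blast
  show ?thesis
    by (rule int_prod[OF smooth_cont_x[OF s t] smooth_cont_x[OF s t] _ _ g1(1) g2(1)])
       (use g1 g2 t in auto)
qed

lemma bnd_D:
  assumes s: "smooth_hp u" and d: "decays_hp u" and t: "t \<ge> 0"
  shows "\<exists>M. \<forall>x. \<bar>pD ds u t x\<bar> \<le> M"
proof -
  let ?f = "pD ds u t"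
  obtain g where g: "(g \<longlongrightarrow> 0) at_infinity" "\<forall>s\<in>{0..t}. \<forall>x. \<bar>pD ds u s x\<bar> \<le> g x"
    using decay_D[OF d, of t ds] by blast
  have "(?f \<longlongrightarrow> 0) at_infinity"
    by (rule Lim_null_comparison[OF _ g(1)]) (use g(2) t in auto)
  then have "eventually (\<lambda>x. dist (?f x) 0 < 1) at_infinity"
    by (rule tendstoD) simp
  then obtain R where R: "\<And>x. norm x \<ge> R \<Longrightarrow> \<bar>?f x\<bar> < 1"
    unfolding eventually_at_infinity by auto
  have "compact (?f ` cball 0 R)"
    by (rule compact_continuous_image[OF continuous_on_subset[OF smooth_cont_x[OF s t]]]) auto
  then obtain B where B: "\<And>y. y \<in> ?f ` cball 0 R \<Longrightarrow> norm y \<le> B"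
    using compact_imp_bounded bounded_iff by metis
  show ?thesis
  proof (intro exI allI)
    fix x
    show "\<bar>?f x\<bar> \<le> max 1 B"
    proof (cases "norm x \<ge> R")
      case True then show ?thesis using R[of x] by auto
    next
      case False then have "x \<in> cball 0 R" by auto
      then show ?thesis using B[of "?f x"] by auto
    qed
  qed
qed

lemma IBP_u:
  assumes s: "smooth_hp u" and d: "decays_hp u" and t: "t \<ge> 0"
    and hb: "\<And>x. pD (Dx # b) u t x = hb' x"
  shows "(LINT x|lborel. pD a u t x * hb' x) = - (LINT x|lborel. pD (Dx # a) u t x * pD b u t x)"
proof (rule IBP)
  show "(pD a u t has_real_derivative pD (Dx # a) u t x) (at x)" for x
    using smooth_D(3)[OF s t, of a x] by simp
  show "(pD b u t has_real_derivative hb' x) (at x)" for x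
    using smooth_D(3)[OF s t, of b x] hb by simp
  show "continuous_on UNIV (pD (Dx # a) u t)" by (rule smooth_cont_x[OF s t])
  have "hb' = pD (Dx # b) u t" using hb by auto
  then show "continuous_on UNIV hb'" using smooth_cont_x[OF s t] by metis
  show "integrable lborel (\<lambda>x. pD a u t x * hb' x)"
    using intpp[OF s d t, of a "Dx # b"] hb by simp
  show "integrable lborel (\<lambda>x. pD (Dx # a) u t x * pD b u t x)"
    by (rule intpp[OF s d t])
  show "((\<lambda>x. pD a u t x * pD b u t x) \<longlongrightarrow> 0) at_top"
    using tendsto_mult[OF lim_D(1)[OF d t, of a] lim_D(1)[OF d t, of b]] by simp
  show "((\<lambda>x. pD a u t x * pD b u t x) \<longlongrightarrow> 0) at_bot"
    using tendsto_mult[OF lim_D(2)[OF d t, of a] lim_D(2)[OF d t, of b]] by simp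
qed



lemma pdx_sq:
  assumes s: "smooth_hp u" and t: "t \<ge> 0"
  shows "pdx (\<lambda>s y. (u s y)^2) t x = 2 * u t x * pdx u t x"
proof -
  have "((\<lambda>y. u t y) has_real_derivative pdx u t x) (at x)"
    using smooth_D(3)[OF s t, of "[]" x] by simp
  from DERIV_power[OF this, of 2]
  have "((\<lambda>y. (u t y)^2) has_real_derivative 2 * u t x * pdx u t x) (at x)"
    by (simp add: mult.commute mult.left_commute)
  then show ?thesis unfolding pdx_def by (rule DERIV_imp_deriv)
qed

lemma cubic_zero:
  assumes s: "smooth_hp u" and d: "decays_hp u" and t: "t \<ge> 0"
  shows "integrable lborel (\<lambda>x. u t x * (2 * u t x * pdx u t x))"
    and "(LINT x|lborel. u t x * (2 * u t x * pdx u t x)) = 0"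
proof -
  obtain M where M: "\<And>x. \<bar>pD [] u t x\<bar> \<le> M" using bnd_D[OF s d t] by blast
  have i1: "integrable lborel (\<lambda>x. u t x * pdx u t x)"
    using intpp[OF s d t, of "[]" "[Dx]"] by simp
  have cu: "continuous_on UNIV (u t)" using smooth_cont_x[OF s t, of "[]"] by simp
  have cu1: "continuous_on UNIV (pdx u t)" using smooth_cont_x[OF s t, of "[Dx]"] by simp
  show i2: "integrable lborel (\<lambda>x. u t x * (2 * u t x * pdx u t x))"
  proof (rule Bochner_Integration.integrable_bound[where f="\<lambda>x. 2 * M * (u t x * pdx u t x)"])
    show "integrable lborel (\<lambda>x. 2 * M * (u t x * pdx u t x))" using i1 by simp
    show "(\<lambda>x. u t x * (2 * u t x * pdx u t x)) \<in> borel_measurable lborel"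
      using cu cu1 by (auto intro!: borel_measurable_continuous_onI continuous_intros)
    show "AE x in lborel. norm (u t x * (2 * u t x * pdx u t x)) \<le> norm (2 * M * (u t x * pdx u t x))"
    proof (rule AE_I2)
      fix x
      have m: "\<bar>u t x\<bar> \<le> M" using M[of x] by simp
      have "\<bar>u t x * (2 * u t x * pdx u t x)\<bar> = 2 * \<bar>u t x\<bar> * \<bar>u t x * pdx u t x\<bar>"
        by (simp add: abs_mult)
      also have "\<dots> \<le> 2 * M * \<bar>u t x * pdx u t x\<bar>"
        using m by (intro mult_right_mono) auto
      also have "\<dots> \<le> \<bar>2 * M * (u t x * pdx u t x)\<bar>"
        by (simp add: abs_mult mult_right_mono)
      finally show "norm (u t x * (2 * u t x * pdx u t x)) \<le> norm (2 * M * (u t x * pdx u t x))"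
        by simp
    qed
  qed
  show "(LINT x|lborel. u t x * (2 * u t x * pdx u t x)) = 0"
  proof (rule FTC_R[where F="\<lambda>x. 2/3 * (u t x)^3"])
    show "((\<lambda>x. 2/3 * (u t x)^3) has_real_derivative u t x * (2 * u t x * pdx u t x)) (at x)" for x
    proof -
      have "((\<lambda>y. u t y) has_real_derivative pdx u t x) (at x)"
        using smooth_D(3)[OF s t, of "[]" x] by simp
      from DERIV_cmult[OF DERIV_power[OF this, of 3], of "2/3"]
      show ?thesis by (simp add: power2_eq_square mult_ac)
    qed
    show "continuous_on UNIV (\<lambda>x. u t x * (2 * u t x * pdx u t x))"
      using cu cu1 by (intro continuous_intros) auto
    show "integrable lborel (\<lambda>x. u t x * (2 * u t x * pdx u t x))" by (rule i2)
    show "((\<lambda>x. 2/3 * (u t x)^3) \<longlongrightarrow> 0) at_top"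
      using tendsto_mult[OF tendsto_const[of "2/3"] tendsto_power[OF lim_D(1)[OF d t, of "[]"], of 3]] by simp
    show "((\<lambda>x. 2/3 * (u t x)^3) \<longlongrightarrow> 0) at_bot"
      using tendsto_mult[OF tendsto_const[of "2/3"] tendsto_power[OF lim_D(2)[OF d t, of "[]"], of 3]] by simp
  qed
qed



lemma energy_id:
  assumes s: "smooth_hp u" and d: "decays_hp u" and tp: "t > 0"
    and eq: "\<forall>x. pdt u t x + pdx (\<lambda>s y. (u s y)^2) t x + \<beta> * pD [Dx, Dx, Dx] u t x
       - \<beta> * pD [Dt, Dx, Dx] u t x + \<beta>^2 * pD [Dt, Dx, Dx, Dx, Dx] u t x
       = \<epsilon> * pD [Dx, Dx] u t x"
  shows "(LINT x|lborel. u t x * pdt u t x) + \<beta> * (LINT x|lborel. pdx u t x * pdt (pdx u) t x)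
     + \<beta>^2 * (LINT x|lborel. pdx (pdx u) t x * pdt (pdx (pdx u)) t x)
     = - \<epsilon> * (LINT x|lborel. pdx u t x * pdx u t x)"
proof -
  have t0: "t \<ge> 0" using tp by simp
  have b1: "(LINT x|lborel. u t x * pdx (pdx (pdx u)) t x) = - (LINT x|lborel. pdx u t x * pdx (pdx u) t x)"
    using IBP_u[OF s d t0, where a="[]" and b="[Dx,Dx]", OF refl] by simp
  have b2: "(LINT x|lborel. pdx u t x * pdx (pdx u) t x) = - (LINT x|lborel. pdx (pdx u) t x * pdx u t x)"
    using IBP_u[OF s d t0, where a="[Dx]" and b="[Dx]", OF refl] by simp
  have b3: "(LINT x|lborel. pdx u t x * pdx (pdx u) t x) = 0"
    using b2 by (simp add: mult.commute)
  have c: "(LINT x|lborel. u t x * pdt (pdx (pdx u)) t x) = - (LINT x|lborel. pdx u t x * pdt (pdx u) t x)"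
    using IBP_u[OF s d t0, where a="[]" and b="[Dt,Dx]", OF schwarz[OF s tp, of "[Dx]", symmetric]] by simp
  have d1: "(LINT x|lborel. u t x * pdt (pdx (pdx (pdx (pdx u)))) t x)
      = - (LINT x|lborel. pdx u t x * pdt (pdx (pdx (pdx u))) t x)"
    using IBP_u[OF s d t0, where a="[]" and b="[Dt,Dx,Dx,Dx]", OF schwarz[OF s tp, of "[Dx,Dx,Dx]", symmetric]]
    by simp
  have d2: "(LINT x|lborel. pdx u t x * pdt (pdx (pdx (pdx u))) t x)
      = - (LINT x|lborel. pdx (pdx u) t x * pdt (pdx (pdx u)) t x)"
    using IBP_u[OF s d t0, where a="[Dx]" and b="[Dt,Dx,Dx]", OF schwarz[OF s tp, of "[Dx,Dx]", symmetric]]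
    by simp
  have e: "(LINT x|lborel. u t x * pdx (pdx u) t x) = - (LINT x|lborel. pdx u t x * pdx u t x)"
    using IBP_u[OF s d t0, where a="[]" and b="[Dx]", OF refl] by simp
  have i0: "integrable lborel (\<lambda>x. u t x * pdt u t x)"
    using intpp[OF s d t0, of "[]" "[Dt]"] by simp
  have i1: "integrable lborel (\<lambda>x. u t x * pdx (pdx u) t x)"
    using intpp[OF s d t0, of "[]" "[Dx,Dx]"] by simp
  have i2: "integrable lborel (\<lambda>x. u t x * (2 * u t x * pdx u t x))"
    by (rule cubic_zero(1)[OF s d t0])
  have i3: "integrable lborel (\<lambda>x. u t x * pdx (pdx (pdx u)) t x)"
    using intpp[OF s d t0, of "[]" "[Dx,Dx,Dx]"] by simp
  have i4: "integrable lborel (\<lambda>x. u t x * pdt (pdx (pdx u)) t x)"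
    using intpp[OF s d t0, of "[]" "[Dt,Dx,Dx]"] by simp
  have i5: "integrable lborel (\<lambda>x. u t x * pdt (pdx (pdx (pdx (pdx u)))) t x)"
    using intpp[OF s d t0, of "[]" "[Dt,Dx,Dx,Dx,Dx]"] by simp
  have pw: "u t x * pdt u t x = \<epsilon> * (u t x * pdx (pdx u) t x) - u t x * (2 * u t x * pdx u t x)
      - \<beta> * (u t x * pdx (pdx (pdx u)) t x) + \<beta> * (u t x * pdt (pdx (pdx u)) t x)
      - \<beta>^2 * (u t x * pdt (pdx (pdx (pdx (pdx u)))) t x)" for x
  proof -
    have "pdt u t x + 2 * u t x * pdx u t x + \<beta> * pdx (pdx (pdx u)) t x
       - \<beta> * pdt (pdx (pdx u)) t x + \<beta>^2 * pdt (pdx (pdx (pdx (pdx u)))) t x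
       = \<epsilon> * pdx (pdx u) t x"
      using eq[rule_format, of x] pdx_sq[OF s t0, of x] by simp
    then have "u t x * (pdt u t x + 2 * u t x * pdx u t x + \<beta> * pdx (pdx (pdx u)) t x
       - \<beta> * pdt (pdx (pdx u)) t x + \<beta>^2 * pdt (pdx (pdx (pdx (pdx u)))) t x)
       = u t x * (\<epsilon> * pdx (pdx u) t x)" by simp
    then show ?thesis by (simp add: algebra_simps)
  qed
  have "(LINT x|lborel. u t x * pdt u t x) =
     (LINT x|lborel. \<epsilon> * (u t x * pdx (pdx u) t x) - u t x * (2 * u t x * pdx u t x)
      - \<beta> * (u t x * pdx (pdx (pdx u)) t x) + \<beta> * (u t x * pdt (pdx (pdx u)) t x)
      - \<beta>^2 * (u t x * pdt (pdx (pdx (pdx (pdx u)))) t x))"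
    by (simp only: pw)
  also have "\<dots> = \<epsilon> * (LINT x|lborel. u t x * pdx (pdx u) t x)
      - (LINT x|lborel. u t x * (2 * u t x * pdx u t x))
      - \<beta> * (LINT x|lborel. u t x * pdx (pdx (pdx u)) t x)
      + \<beta> * (LINT x|lborel. u t x * pdt (pdx (pdx u)) t x)
      - \<beta>^2 * (LINT x|lborel. u t x * pdt (pdx (pdx (pdx (pdx u)))) t x)"
    using i1 i2 i3 i4 i5 by simp
  finally have main: "(LINT x|lborel. u t x * pdt u t x) = \<epsilon> * (LINT x|lborel. u t x * pdx (pdx u) t x)
      - (LINT x|lborel. u t x * (2 * u t x * pdx u t x))
      - \<beta> * (LINT x|lborel. u t x * pdx (pdx (pdx u)) t x)
      + \<beta> * (LINT x|lborel. u t x * pdt (pdx (pdx u)) t x)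
      - \<beta>^2 * (LINT x|lborel. u t x * pdt (pdx (pdx (pdx (pdx u)))) t x)" .
  show ?thesis
    unfolding main b1 b3 c d1 d2 e cubic_zero(2)[OF s d t0] by (simp add: algebra_simps)
qed



lemma deriv_L2_u:
  assumes s: "smooth_hp u" and d: "decays_hp u" and t: "t \<ge> 0"
  shows "((\<lambda>s. LINT x|lborel. (pD a u s x)^2) has_real_derivative
           (LINT x|lborel. 2 * pD a u t x * pD (Dt # a) u t x)) (at t within {0..})"
  by (rule deriv_L2[OF smooth_D(2)[OF s] smooth_cont_x[OF s] smooth_cont_x[OF s] dom_D[OF d] dom_D[OF d] t])

lemma ab_bound:
  fixes a b r :: real
  assumes r: "r > 0"
  shows "\<bar>2 * a * b\<bar> \<le> a^2 / r + r * b^2"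
proof -
  have "a^2 / r + r * b^2 - \<bar>2 * a * b\<bar> = (\<bar>a\<bar> - r * \<bar>b\<bar>)^2 / r"
    using r by (simp add: field_simps power2_eq_square abs_mult)
  moreover have "(\<bar>a\<bar> - r * \<bar>b\<bar>)^2 / r \<ge> 0" using r by simp
  ultimately show ?thesis by linarith
qed

lemma sq_bound:
  assumes s: "smooth_hp u" and d: "decays_hp u" and t: "t \<ge> 0" and r: "r > 0"
  shows "(pD a u t x)^2 \<le> (LINT y|lborel. (pD a u t y)^2) / r + r * (LINT y|lborel. (pD (Dx # a) u t y)^2)"
proof -
  let ?f = "pD a u t" and ?g = "pD (Dx # a) u t"
  have ip: "integrable lborel (\<lambda>y. ?f y * ?g y)" by (rule intpp[OF s d t])
  have i1: "integrable lborel (\<lambda>y. (?f y)^2)" using intpp[OF s d t, of a a] by (simp add: power2_eq_square)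
  have i2: "integrable lborel (\<lambda>y. (?g y)^2)" using intpp[OF s d t, of "Dx # a" "Dx # a"]
    by (simp add: power2_eq_square)
  have "(?f x)^2 \<le> (LINT y|lborel. \<bar>2 * ?f y * ?g y\<bar>)"
  proof (rule sup_bound[where F="\<lambda>y. (?f y)^2"])
    show "((\<lambda>y. (?f y)^2) has_real_derivative 2 * ?f y * ?g y) (at y)" for y
      using DERIV_power[OF smooth_D(3)[OF s t, of a y], of 2] by (simp add: mult_ac)
    show "continuous_on UNIV (\<lambda>y. 2 * ?f y * ?g y)"
      using smooth_cont_x[OF s t, of a] smooth_cont_x[OF s t, of "Dx # a"]
      by (intro continuous_intros) auto
    show "integrable lborel (\<lambda>y. 2 * ?f y * ?g y)" using ip by (simp add: mult.assoc)
    show "((\<lambda>y. (?f y)^2) \<longlongrightarrow> 0) at_bot"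
      using tendsto_power[OF lim_D(2)[OF d t, of a], of 2] by simp
  qed
  also have "\<dots> \<le> (LINT y|lborel. (?f y)^2 / r + r * (?g y)^2)"
  proof (rule integral_mono)
    show "integrable lborel (\<lambda>y. \<bar>2 * ?f y * ?g y\<bar>)" using ip by (simp add: mult.assoc)
    show "integrable lborel (\<lambda>y. (?f y)^2 / r + r * (?g y)^2)" using i1 i2 by simp
    show "\<bar>2 * ?f y * ?g y\<bar> \<le> (?f y)^2 / r + r * (?g y)^2" for y by (rule ab_bound[OF r])
  qed
  also have "\<dots> = (LINT y|lborel. (?f y)^2) / r + r * (LINT y|lborel. (?g y)^2)"
    using i1 i2 by simp
  finally show ?thesis .
qed



lemma L2sq_nonneg: "L2sq f \<ge> 0"
  unfolding L2sq_def by (rule integral_nonneg_AE) auto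

lemma L4_nonneg: "L4pow4 f \<ge> 0"
  unfolding L4pow4_def by (rule integral_nonneg_AE) auto

theorem lemma2p1:
  fixes C0 :: real
  shows "\<exists>C :: real. \<forall>(\<epsilon>::real) (\<beta>::real) (u0 :: real \<Rightarrow> real) (u :: real \<Rightarrow> real \<Rightarrow> real).
    \<epsilon> > 0 \<longrightarrow> \<beta> > 0 \<longrightarrow>
    L2sq u0 + L4pow4 u0 + (\<beta> + \<epsilon>^2) * L2sq (deriv u0) \<le> C0 \<longrightarrow>
    (\<beta>*\<epsilon> + \<beta>*\<epsilon>^2 + \<beta>^2) * L2sq ((deriv ^^ 2) u0)
      + (\<beta>^2*\<epsilon>^2 + \<beta>^3) * L2sq ((deriv ^^ 3) u0) \<le> C0 \<longrightarrow>
    \<beta>^4 * L2sq ((deriv ^^ 4) u0) \<le> C0 \<longrightarrow>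
    smooth_hp u \<longrightarrow> decays_hp u \<longrightarrow>
    (\<forall>x. u 0 x = u0 x) \<longrightarrow>
    (\<forall>t>0. \<forall>x.
       pdt u t x + pdx (\<lambda>s y. (u s y)^2) t x + \<beta> * pD [Dx, Dx, Dx] u t x
       - \<beta> * pD [Dt, Dx, Dx] u t x + \<beta>^2 * pD [Dt, Dx, Dx, Dx, Dx] u t x
       = \<epsilon> * pD [Dx, Dx] u t x) \<longrightarrow>
    (\<forall>t>0.
       set_integrable lborel {0..t} (\<lambda>s. L2sq (pdx u s)) \<and>
       L2sq (u t) + \<beta> * L2sq (pdx u t) + \<beta>^2 * L2sq (pD [Dx, Dx] u t)
         + 2 * \<epsilon> * (LINT s:{0..t}|lborel. L2sq (pdx u s)) \<le> C \<and>
       (\<forall>x. \<bar>u t x\<bar> \<le> C * \<beta> powr (-1/4)) \<and>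
       (\<forall>x. \<bar>pdx u t x\<bar> \<le> C * \<beta> powr (-3/4)))"
proof (intro exI[of _ "2 * \<bar>C0\<bar> + 2 * sqrt \<bar>C0\<bar>"] allI impI)
  let ?C = "2 * \<bar>C0\<bar> + 2 * sqrt \<bar>C0\<bar>"
  fix \<epsilon> \<beta> :: real and u0 :: "real \<Rightarrow> real" and u :: "real \<Rightarrow> real \<Rightarrow> real" and t :: real
  assume ep: "\<epsilon> > 0" and bp: "\<beta> > 0"
    and h1: "L2sq u0 + L4pow4 u0 + (\<beta> + \<epsilon>^2) * L2sq (deriv u0) \<le> C0"
    and h2: "(\<beta>*\<epsilon> + \<beta>*\<epsilon>^2 + \<beta>^2) * L2sq ((deriv ^^ 2) u0)
      + (\<beta>^2*\<epsilon>^2 + \<beta>^3) * L2sq ((deriv ^^ 3) u0) \<le> C0"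
    and s: "smooth_hp u" and d: "decays_hp u" and init: "\<forall>x. u 0 x = u0 x"
    and eq: "\<forall>t>0. \<forall>x.
       pdt u t x + pdx (\<lambda>s y. (u s y)^2) t x + \<beta> * pD [Dx, Dx, Dx] u t x
       - \<beta> * pD [Dt, Dx, Dx] u t x + \<beta>^2 * pD [Dt, Dx, Dx, Dx, Dx] u t x
       = \<epsilon> * pD [Dx, Dx] u t x"
    and tp: "t > 0"
  define P0 where "P0 s = (LINT x|lborel. (u s x)^2)" for s
  define P1 where "P1 s = (LINT x|lborel. (pdx u s x)^2)" for s
  define P2 where "P2 s = (LINT x|lborel. (pdx (pdx u) s x)^2)" for s
  define E where "E s = P0 s + \<beta> * P1 s + \<beta>^2 * P2 s" for s
  define E' where "E' s = (LINT x|lborel. 2 * u s x * pdt u s x)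
      + \<beta> * (LINT x|lborel. 2 * pdx u s x * pdt (pdx u) s x)
      + \<beta>^2 * (LINT x|lborel. 2 * pdx (pdx u) s x * pdt (pdx (pdx u)) s x)" for s
  have P0n: "P0 s \<ge> 0" for s unfolding P0_def by (rule integral_nonneg_AE) auto
  have P1n: "P1 s \<ge> 0" for s unfolding P1_def by (rule integral_nonneg_AE) auto
  have P2n: "P2 s \<ge> 0" for s unfolding P2_def by (rule integral_nonneg_AE) auto
  have dP0: "(P0 has_real_derivative (LINT x|lborel. 2 * u s x * pdt u s x)) (at s within {0..})"
    if "s \<ge> 0" for s
    using deriv_L2_u[OF s d that, of "[]"] unfolding P0_def by simp
  have dP1: "(P1 has_real_derivative (LINT x|lborel. 2 * pdx u s x * pdt (pdx u) s x)) (at s within {0..})"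
    if "s \<ge> 0" for s
    using deriv_L2_u[OF s d that, of "[Dx]"] unfolding P1_def by simp
  have dP2: "(P2 has_real_derivative (LINT x|lborel. 2 * pdx (pdx u) s x * pdt (pdx (pdx u)) s x)) (at s within {0..})"
    if "s \<ge> 0" for s
    using deriv_L2_u[OF s d that, of "[Dx,Dx]"] unfolding P2_def by simp
  have dE: "(E has_real_derivative E' s) (at s within {0..})" if "s \<ge> 0" for s
    using DERIV_add[OF DERIV_add[OF dP0[OF that] DERIV_cmult[OF dP1[OF that], of \<beta>]]
        DERIV_cmult[OF dP2[OF that], of "\<beta>^2"]]
    unfolding E_def[abs_def] E'_def by simp
  have E's: "E' s = - 2 * \<epsilon> * P1 s" if "s > 0" for s
  proof -
    have "E' s = 2 * ((LINT x|lborel. u s x * pdt u s x) + \<beta> * (LINT x|lborel. pdx u s x * pdt (pdx u) s x)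
     + \<beta>^2 * (LINT x|lborel. pdx (pdx u) s x * pdt (pdx (pdx u)) s x))"
      unfolding E'_def by (simp add: mult.assoc algebra_simps)
    also have "\<dots> = 2 * (- \<epsilon> * (LINT x|lborel. pdx u s x * pdx u s x))"
      using energy_id[OF s d that, of \<beta> \<epsilon>] eq that by simp
    finally show ?thesis unfolding P1_def by (simp add: power2_eq_square)
  qed
  have cP1: "continuous_on {0..t} P1"
    by (rule DERIV_continuous_on[OF DERIV_subset[OF dP1]]) auto
  have cE: "continuous_on {0..t} E"
    by (rule DERIV_continuous_on[OF DERIV_subset[OF dE]]) auto
  have FT: "((\<lambda>s. - 2 * \<epsilon> * P1 s) has_integral (E t - E 0)) {0..t}"
  proof (rule fundamental_theorem_of_calculus_interior)
    show "0 \<le> t" using tp by simp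
    show "continuous_on {0..t} E" by (rule cE)
    fix x :: real assume x: "x \<in> {0<..<t}"
    have "x \<in> interior {0::real..}" using x by simp
    then have "(E has_real_derivative E' x) (at x)"
      using dE[of x] x at_within_interior by fastforce
    then show "(E has_vector_derivative - 2 * \<epsilon> * P1 x) (at x)"
      using E's[of x] x by (simp add: has_real_derivative_iff_has_vector_derivative)
  qed
  have si: "set_integrable lborel {0..t} P1" by (rule borel_integrable_atLeastAtMost'[OF cP1])
  define I where "I = (LINT s:{0..t}|lborel. P1 s)"
  have I1: "(P1 has_integral I) {0..t}"
    unfolding I_def set_borel_integral_eq_integral(2)[OF si]
    using set_borel_integral_eq_integral(1)[OF si] by (simp add: has_integral_integral)
  have "((\<lambda>s. - 2 * \<epsilon> * P1 s) has_integral (- 2 * \<epsilon> * I)) {0..t}"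
    using has_integral_mult_right[OF I1, of "- 2 * \<epsilon>"] by simp
  then have EI: "E t - E 0 = - 2 * \<epsilon> * I" using FT has_integral_unique by blast
  have In: "I \<ge> 0"
    unfolding I_def set_borel_integral_eq_integral(2)[OF si]
    by (rule integral_nonneg) (use set_borel_integral_eq_integral(1)[OF si] P1n in auto)
  have u0e: "u 0 = u0" using init by auto
  have d1: "pdx u 0 = deriv u0" unfolding pdx_def u0e by (rule ext) simp
  have d2: "pdx (pdx u) 0 = (deriv ^^ 2) u0"
    unfolding numeral_2_eq_2 by (rule ext) (simp add: pdx_def[of "pdx u"] d1)
  have E0: "E 0 = L2sq u0 + \<beta> * L2sq (deriv u0) + \<beta>^2 * L2sq ((deriv ^^ 2) u0)"
    unfolding E_def P0_def P1_def P2_def L2sq_def u0e d1 d2 by simp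
  have "L2sq u0 + \<beta> * L2sq (deriv u0) \<le> C0"
  proof -
    have "0 \<le> \<epsilon>^2 * L2sq (deriv u0)" using L2sq_nonneg[of "deriv u0"] by simp
    moreover have "(\<beta> + \<epsilon>^2) * L2sq (deriv u0) = \<beta> * L2sq (deriv u0) + \<epsilon>^2 * L2sq (deriv u0)"
      by (simp add: distrib_right)
    ultimately show ?thesis using h1 L4_nonneg[of u0] by linarith
  qed
  moreover have "\<beta>^2 * L2sq ((deriv ^^ 2) u0) \<le> C0"
  proof -
    have a: "0 \<le> (\<beta>*\<epsilon> + \<beta>*\<epsilon>^2) * L2sq ((deriv ^^ 2) u0)"
      using bp ep L2sq_nonneg by simp
    have b: "0 \<le> (\<beta>^2*\<epsilon>^2 + \<beta>^3) * L2sq ((deriv ^^ 3) u0)"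
      using bp ep L2sq_nonneg by simp
    show ?thesis using h2 a b by (simp add: algebra_simps)
  qed
  ultimately have E0b: "E 0 \<le> 2 * C0" unfolding E0 by simp
  have C0n: "C0 \<ge> 0"
  proof -
    have "0 \<le> \<beta>^2 * L2sq ((deriv ^^ 2) u0)" using L2sq_nonneg by simp
    then show ?thesis using \<open>\<beta>^2 * L2sq ((deriv ^^ 2) u0) \<le> C0\<close> by linarith
  qed
  have "0 \<le> 2 * \<epsilon> * I" using ep In by simp
  then have Ct: "E t \<le> 2 * C0" using EI E0b by linarith
  have q1: "0 \<le> \<beta> * P1 t" using bp P1n by simp
  have q2: "0 \<le> \<beta>^2 * P2 t" using bp P2n by simp
  have b0: "P0 t \<le> 2 * C0" and b1: "\<beta> * P1 t \<le> 2 * C0" and b2: "\<beta>^2 * P2 t \<le> 2 * C0"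
    using Ct P0n[of t] q1 q2 unfolding E_def by linarith+
  show "set_integrable lborel {0..t} (\<lambda>s. L2sq (pdx u s)) \<and>
       L2sq (u t) + \<beta> * L2sq (pdx u t) + \<beta>^2 * L2sq (pD [Dx, Dx] u t)
         + 2 * \<epsilon> * (LINT s:{0..t}|lborel. L2sq (pdx u s)) \<le> ?C \<and>
       (\<forall>x. \<bar>u t x\<bar> \<le> ?C * \<beta> powr (-1/4)) \<and>
       (\<forall>x. \<bar>pdx u t x\<bar> \<le> ?C * \<beta> powr (-3/4))"
  proof (intro conjI allI)
    have L: "(\<lambda>s. L2sq (pdx u s)) = P1" unfolding L2sq_def P1_def by simp
    show "set_integrable lborel {0..t} (\<lambda>s. L2sq (pdx u s))" unfolding L by (rule si)
    have "L2sq (u t) + \<beta> * L2sq (pdx u t) + \<beta>^2 * L2sq (pD [Dx, Dx] u t)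
         + 2 * \<epsilon> * (LINT s:{0..t}|lborel. L2sq (pdx u s)) = E 0"
    proof -
      have "(LINT s:{0..t}|lborel. L2sq (pdx u s)) = I" unfolding I_def L by simp
      moreover have "L2sq (u t) + \<beta> * L2sq (pdx u t) + \<beta>^2 * L2sq (pD [Dx, Dx] u t) = E t"
        unfolding E_def P0_def P1_def P2_def L2sq_def by simp
      ultimately show ?thesis using EI by simp
    qed
    then show "L2sq (u t) + \<beta> * L2sq (pdx u t) + \<beta>^2 * L2sq (pD [Dx, Dx] u t)
         + 2 * \<epsilon> * (LINT s:{0..t}|lborel. L2sq (pdx u s)) \<le> ?C"
    proof -
      have a: "0 \<le> sqrt \<bar>C0\<bar>" by simp
      have b: "\<bar>C0\<bar> = C0" using C0n by simp
      show ?thesis using E0b a b \<open>_ = E 0\<close> by linarith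
    qed
    define r where "r = sqrt \<beta>"
    have rp: "r > 0" using bp unfolding r_def by simp
    have rr: "r * r = \<beta>" using bp unfolding r_def by simp
    have Cq: "?C^2 \<ge> 4 * C0" "?C \<ge> 0"
    proof -
      have "(2 * sqrt C0)^2 = 4 * C0" using C0n by (simp add: power_mult_distrib)
      moreover have "(2 * sqrt C0)^2 \<le> ?C^2" using C0n by (intro power_mono) auto
      ultimately show "?C^2 \<ge> 4 * C0" by simp
    qed simp
    fix x
    show "\<bar>u t x\<bar> \<le> ?C * \<beta> powr (-1/4)"
    proof -
      have "(u t x)^2 \<le> P0 t / r + r * P1 t"
        using sq_bound[OF s d _ rp, of t "[]" x] tp unfolding P0_def P1_def by simp
      also have "\<dots> \<le> 2 * C0 / r + r * (2 * C0 / \<beta>)"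
        using b0 b1 rp bp by (intro add_mono divide_right_mono mult_left_mono) (auto simp: field_simps)
      also have "\<dots> = 4 * C0 / r" using rp by (simp add: field_simps flip: rr)
      finally have A: "(u t x)^2 \<le> 4 * C0 / r" .
      define p where "p = \<beta> powr (-1/4)"
      have pp: "p > 0" using bp unfolding p_def by simp
      have p2: "p^2 = 1 / r"
      proof -
        have "p^2 = \<beta> powr (-1/4 + -1/4)" unfolding p_def power2_eq_square powr_add by simp
        also have "\<dots> = inverse (\<beta> powr (1/2))" using powr_minus[of \<beta> "1/2"] by simp
        finally show ?thesis using powr_half_sqrt[of \<beta>] bp unfolding r_def by (simp add: field_simps)
      qed
      have "(u t x)^2 \<le> (?C * p)^2"
      proof -
        have "4 * C0 / r \<le> ?C^2 / r" using Cq rp by (simp add: divide_right_mono)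
        then show ?thesis using A p2 by (simp add: power_mult_distrib)
      qed
      then have h: "\<bar>u t x\<bar>^2 \<le> (?C * p)^2" by simp
      have "0 \<le> ?C * p" using Cq(2) pp by simp
      then have "\<bar>u t x\<bar> \<le> ?C * p" using h by (rule power2_le_imp_le[rotated])
      then show ?thesis unfolding p_def .
    qed
    show "\<bar>pdx u t x\<bar> \<le> ?C * \<beta> powr (-3/4)"
    proof -
      have "(pdx u t x)^2 \<le> P1 t / r + r * P2 t"
        using sq_bound[OF s d _ rp, of t "[Dx]" x] tp unfolding P1_def P2_def by simp
      also have "\<dots> \<le> (2 * C0 / \<beta>) / r + r * (2 * C0 / \<beta>^2)"
        using b1 b2 rp bp by (intro add_mono divide_right_mono mult_left_mono) (auto simp: field_simps)
      also have "\<dots> = 4 * C0 / (\<beta> * r)" using rr rp bp by (simp add: field_simps power2_eq_square)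
      finally have A: "(pdx u t x)^2 \<le> 4 * C0 / (\<beta> * r)" .
      define p where "p = \<beta> powr (-3/4)"
      have pp: "p > 0" using bp unfolding p_def by simp
      have p2: "p^2 = 1 / (\<beta> * r)"
      proof -
        have "p^2 = \<beta> powr (-(1 + 1/2))" unfolding p_def power2_eq_square powr_add[symmetric] by simp
        also have "\<dots> = inverse (\<beta> * \<beta> powr (1/2))"
        proof -
          have "\<beta> powr (1 + 1/2) = \<beta> * \<beta> powr (1/2)" using powr_add[of \<beta> 1 "1/2"] bp by simp
          then show ?thesis using powr_minus[of \<beta> "1 + 1/2"] by simp
        qed
        finally show ?thesis using powr_half_sqrt[of \<beta>] bp unfolding r_def by (simp add: field_simps)
      qed
      have "(pdx u t x)^2 \<le> (?C * p)^2"
      proof -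
        have "4 * C0 / (\<beta> * r) \<le> ?C^2 / (\<beta> * r)" using Cq rp bp by (simp add: divide_right_mono)
        then show ?thesis using A p2 by (simp add: power_mult_distrib)
      qed
      then have h: "\<bar>pdx u t x\<bar>^2 \<le> (?C * p)^2" by simp
      have "0 \<le> ?C * p" using Cq(2) pp by simp
      then have "\<bar>pdx u t x\<bar> \<le> ?C * p" using h by (rule power2_le_imp_le[rotated])
      then show ?thesis unfolding p_def .
    qed
  qed
qed

end
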